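(* Let $(R,\omega_\Omega,\alpha)$ be a represented system for an arbitrary group $G$. Let $B$ be the set of all eigenoperators of $\alpha$ together with the zero operator, let $C$ be the $*$-algebra generated by $B$, and set $N:=C''$. Then $(N,\omega_\Omega,\alpha)$ is a compact factor of $(R,\omega_\Omega,\alpha)$; that is, $\alpha_g(N)\subset N$ for all $g\in G$, and for every $a\in N$ the orbit $\{\alpha_g(a):g\in G\}$ is totally bounded with respect to $\|\cdot\|_\Omega$.
   Context: A represented system $(R,\omega_\Omega,\alpha)$ consists of a von Neumann algebra $R$ on a Hilbert space $H$, a unit vector $\Omega\in H$ cyclic and separating for $R$, the state $\omega_\Omega(a)=\langle\Omega,a\Omega\rangle$ on $R$, and a unitary representation $g\mapsto U_g$ of a group $G$ on $H$ with $U_g\Omega=\Omega$ and $U_gRU_g^*\subset R$ for all $g$, with $\alpha_g(a):=U_gaU_g^*$. An eigenoperator of $\alpha$ is an $a\in R\setminus\{0\}$ for which there is a function $\lambda_a:G\to\mathbb{C}$ with $\alpha_g(a)=\lambda_a(g)a$ for all $g$. $\|a\|_\Omega:=\omega_\Omega(a^*a)^{1/2}=\|a\Omega\|$. $S'$ denotes the commutant of $S\subset B(H)$. A factor of $(R,\omega_\Omega,\alpha)$ consists of a $*$-subalgebra $N\subset R$ with $\alpha_g(N)\subset N$ for all $g$ together with the restrictions of $\omega_\Omega$ and $\alpha_g$. *)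

theory Defs
  imports "HOL-Analysis.Analysis" "HOL-Algebra.Group"
begin

text \<open>HOL-Analysis has no complex inner product spaces, so we introduce the class of
complex Hilbert spaces: a complete real normed vector space with a complex scalar
multiplication extending the real one and a complex inner product (conjugate-linear
in the first, linear in the second argument) inducing the norm.\<close>

class complex_hilbert = real_normed_vector + complete_space +
  fixes scaleC :: "complex \<Rightarrow> 'a \<Rightarrow> 'a"
    and cinner :: "'a \<Rightarrow> 'a \<Rightarrow> complex"
  assumes scaleC_add_right: "scaleC c (x + y) = scaleC c x + scaleC c y"
    and scaleC_add_left: "scaleC (c + d) x = scaleC c x + scaleC d x"
    and scaleC_scaleC: "scaleC c (scaleC d x) = scaleC (c * d) x"
    and scaleC_one: "scaleC 1 x = x"
    and scaleR_scaleC: "scaleR r x = scaleC (complex_of_real r) x"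
    and cinner_add_right: "cinner x (y + z) = cinner x y + cinner x z"
    and cinner_scaleC_right: "cinner x (scaleC c y) = c * cinner x y"
    and cinner_commute: "cinner y x = cnj (cinner x y)"
    and cinner_self_nonneg: "0 \<le> Re (cinner x x)"
    and norm_cinner: "norm x = sqrt (Re (cinner x x))"

definition bounded_op :: "('h::complex_hilbert \<Rightarrow> 'h) \<Rightarrow> bool" where
  "bounded_op f \<longleftrightarrow>
     (\<forall>x y. f (x + y) = f x + f y) \<and> (\<forall>c x. f (scaleC c x) = scaleC c (f x)) \<and>
     (\<exists>K. \<forall>x. norm (f x) \<le> norm x * K)"

definition adj :: "('h::complex_hilbert \<Rightarrow> 'h) \<Rightarrow> ('h \<Rightarrow> 'h)" where
  "adj f = (SOME g. \<forall>x y. cinner (f x) y = cinner x (g y))"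

definition commutant :: "('h::complex_hilbert \<Rightarrow> 'h) set \<Rightarrow> ('h \<Rightarrow> 'h) set" where
  "commutant S = {b. bounded_op b \<and> (\<forall>a\<in>S. a \<circ> b = b \<circ> a)}"

definition zero_op :: "'h::complex_hilbert \<Rightarrow> 'h" where
  "zero_op = (\<lambda>x. 0)"

definition op_add :: "('h::complex_hilbert \<Rightarrow> 'h) \<Rightarrow> ('h \<Rightarrow> 'h) \<Rightarrow> ('h \<Rightarrow> 'h)" where
  "op_add a b = (\<lambda>x. a x + b x)"

definition op_scale :: "complex \<Rightarrow> ('h::complex_hilbert \<Rightarrow> 'h) \<Rightarrow> ('h \<Rightarrow> 'h)" where
  "op_scale c a = (\<lambda>x. scaleC c (a x))"

definition star_subalgebra :: "('h::complex_hilbert \<Rightarrow> 'h) set \<Rightarrow> bool" where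
  "star_subalgebra A \<longleftrightarrow> A \<subseteq> {f. bounded_op f} \<and>
     (\<forall>a\<in>A. \<forall>b\<in>A. op_add a b \<in> A) \<and> (\<forall>c. \<forall>a\<in>A. op_scale c a \<in> A) \<and>
     (\<forall>a\<in>A. \<forall>b\<in>A. a \<circ> b \<in> A) \<and> (\<forall>a\<in>A. adj a \<in> A)"

definition star_alg_gen :: "('h::complex_hilbert \<Rightarrow> 'h) set \<Rightarrow> ('h \<Rightarrow> 'h) set" where
  "star_alg_gen S = \<Inter>{A. S \<subseteq> A \<and> star_subalgebra A}"

definition von_neumann_algebra :: "('h::complex_hilbert \<Rightarrow> 'h) set \<Rightarrow> bool" where
  "von_neumann_algebra R \<longleftrightarrow> star_subalgebra R \<and> id \<in> R \<and> commutant (commutant R) = R"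

definition unitary :: "('h::complex_hilbert \<Rightarrow> 'h) \<Rightarrow> bool" where
  "unitary u \<longleftrightarrow> bounded_op u \<and> u \<circ> adj u = id \<and> adj u \<circ> u = id"

definition represented_system ::
  "('g, 'm) monoid_scheme \<Rightarrow> ('h::complex_hilbert \<Rightarrow> 'h) set \<Rightarrow> 'h \<Rightarrow> ('g \<Rightarrow> 'h \<Rightarrow> 'h) \<Rightarrow> bool" where
  "represented_system G R \<Omega> U \<longleftrightarrow>
     group G \<and> von_neumann_algebra R \<and>
     norm \<Omega> = 1 \<and>
     closure {a \<Omega> | a. a \<in> R} = UNIV \<and>
     (\<forall>a\<in>R. a \<Omega> = 0 \<longrightarrow> a = zero_op) \<and>
     (\<forall>g\<in>carrier G. unitary (U g)) \<and>
     (\<forall>g\<in>carrier G. \<forall>h\<in>carrier G. U (g \<otimes>\<^bsub>G\<^esub> h) = U g \<circ> U h) \<and>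
     U \<one>\<^bsub>G\<^esub> = id \<and>
     (\<forall>g\<in>carrier G. U g \<Omega> = \<Omega>) \<and>
     (\<forall>g\<in>carrier G. \<forall>a\<in>R. U g \<circ> a \<circ> adj (U g) \<in> R)"

definition alpha :: "('g \<Rightarrow> 'h::complex_hilbert \<Rightarrow> 'h) \<Rightarrow> 'g \<Rightarrow> ('h \<Rightarrow> 'h) \<Rightarrow> ('h \<Rightarrow> 'h)" where
  "alpha U g a = U g \<circ> a \<circ> adj (U g)"

definition eigenoperator ::
  "('g, 'm) monoid_scheme \<Rightarrow> ('h::complex_hilbert \<Rightarrow> 'h) set \<Rightarrow> ('g \<Rightarrow> 'h \<Rightarrow> 'h) \<Rightarrow> ('h \<Rightarrow> 'h) \<Rightarrow> bool" where
  "eigenoperator G R U a \<longleftrightarrow> a \<in> R \<and> a \<noteq> zero_op \<and>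
     (\<exists>lam::'g \<Rightarrow> complex. \<forall>g\<in>carrier G. alpha U g a = op_scale (lam g) a)"

definition omega_norm :: "'h::complex_hilbert \<Rightarrow> ('h \<Rightarrow> 'h) \<Rightarrow> real" where
  "omega_norm \<Omega> a = norm (a \<Omega>)"

definition totally_bounded_Omega :: "'h::complex_hilbert \<Rightarrow> ('h \<Rightarrow> 'h) set \<Rightarrow> bool" where
  "totally_bounded_Omega \<Omega> S \<longleftrightarrow>
     (\<forall>e>0. \<exists>k. finite k \<and> (\<forall>a\<in>S. \<exists>b\<in>k. omega_norm \<Omega> (\<lambda>x. a x - b x) < e))"

end

theory Submission
  imports Defs
begin

lemma scaleC_zero_left[simp]: "scaleC 0 x = 0"
  using scaleR_scaleC[of 0 x] by simp

lemma scaleC_zero_right[simp]: "scaleC c 0 = 0"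
  using scaleC_add_right[of c 0 0] by simp

lemma scaleC_minus_left: "scaleC (- c) x = - scaleC c x"
  using minus_unique[of "scaleC c x" "scaleC (-c) x"] scaleC_add_left[of c "-c" x] by simp

lemma scaleC_minus_right: "scaleC c (- x) = - scaleC c x"
  using minus_unique[of "scaleC c x" "scaleC c (-x)"] scaleC_add_right[of c x "-x"] by simp

lemma scaleC_diff_right: "scaleC c (x - y) = scaleC c x - scaleC c y"
  using scaleC_add_right[of c x "-y"] by (simp add: scaleC_minus_right)

lemma scaleC_diff_left: "scaleC (c - d) x = scaleC c x - scaleC d x"
  using scaleC_add_left[of c "-d" x] by (simp add: scaleC_minus_left)

lemma cinner_zero_right[simp]: "cinner x 0 = 0"
  using cinner_add_right[of x 0 0] by simp

lemma cinner_zero_left[simp]: "cinner 0 x = 0"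
  using cinner_commute[of 0 x] by simp

lemma cinner_add_left: "cinner (x + y) z = cinner x z + cinner y z"
  using cinner_commute[of "x+y" z] cinner_commute[of z x] cinner_commute[of z y] by (simp add: cinner_add_right)

lemma cinner_scaleC_left: "cinner (scaleC c x) y = cnj c * cinner x y"
  using cinner_commute[of "scaleC c x" y] cinner_commute[of y x] by (simp add: cinner_scaleC_right)

lemma cinner_minus_right: "cinner x (- y) = - cinner x y"
  using minus_unique[of "cinner x y" "cinner x (-y)"] cinner_add_right[of x y "-y"] by simp

lemma cinner_minus_left: "cinner (- x) y = - cinner x y"
  using minus_unique[of "cinner x y" "cinner (-x) y"] cinner_add_left[of x "-x" y] by simp

lemma cinner_diff_right: "cinner x (y - z) = cinner x y - cinner x z"
  using cinner_add_right[of x y "-z"] by (simp add: cinner_minus_right)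

lemma cinner_diff_left: "cinner (x - y) z = cinner x z - cinner y z"
  using cinner_add_left[of x "-y" z] by (simp add: cinner_minus_left)

lemma norm_sq_cinner: "(norm x)^2 = Re (cinner x x)"
  using norm_cinner[of x] cinner_self_nonneg[of x] by simp

lemma cinner_self: "cinner x x = complex_of_real ((norm x)^2)"
proof -
  have "cnj (cinner x x) = cinner x x" using cinner_commute[of x x] by simp
  hence "Im (cinner x x) = 0" by (metis Reals_cnj_iff complex_is_Real_iff)
  thus ?thesis by (simp add: norm_sq_cinner complex_eqI)
qed

lemma cinner_self_eq_0: "cinner x x = 0 \<longleftrightarrow> x = 0"
  by (simp add: cinner_self)

lemma norm_scaleC: "norm (scaleC c x) = cmod c * norm x"
proof -
  have "(norm (scaleC c x))^2 = Re (cnj c * (c * cinner x x))"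
    by (simp only: norm_sq_cinner cinner_scaleC_left cinner_scaleC_right mult.left_commute)
  also have "cnj c * (c * cinner x x) = (c * cnj c) * complex_of_real ((norm x)^2)"
    by (simp add: cinner_self)
  also have "\<dots> = complex_of_real ((cmod c * norm x)^2)"
    by (simp only: complex_norm_square[symmetric] of_real_mult[symmetric] power_mult_distrib)
  finally have "(norm (scaleC c x))^2 = (cmod c * norm x)^2" by (simp only: Re_complex_of_real)
  thus ?thesis
    by (metis norm_ge_zero mult_nonneg_nonneg power2_eq_imp_eq)
qed

lemma Re_cinner_swap: "Re (cinner y x) = Re (cinner x y)"
  using cinner_commute[of y x] by simp

lemma norm_add_sq: "(norm (x + y))^2 = (norm x)^2 + 2 * Re (cinner x y) + (norm y)^2"
  by (simp add: norm_sq_cinner cinner_add_left cinner_add_right Re_cinner_swap[of y x])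

lemma norm_diff_sq: "(norm (x - y))^2 = (norm x)^2 - 2 * Re (cinner x y) + (norm y)^2"
  by (simp add: norm_sq_cinner cinner_diff_left cinner_diff_right Re_cinner_swap[of y x])

lemma norm_diff_scaleC_sq:
  "(norm (x - scaleC t y))^2 = (norm x)^2 - 2 * Re (t * cinner x y) + (cmod t)^2 * (norm y)^2"
  by (simp add: norm_diff_sq cinner_scaleC_right norm_scaleC power_mult_distrib)

lemma cauchy_schwarz: "cmod (cinner x y) \<le> norm x * norm y"
proof (cases "y = 0")
  case True thus ?thesis by simp
next
  case False
  define n where "n = (norm y)^2"
  have n: "n > 0" using False by (simp add: n_def)
  define c where "c = cinner x y"
  define t where "t = cnj c / complex_of_real n"
  have "0 \<le> (norm (x - scaleC t y))^2" by simp
  also have "\<dots> = (norm x)^2 - 2 * Re (t * c) + (cmod t)^2 * n"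
    by (simp add: norm_diff_scaleC_sq c_def n_def)
  also have "t * c = complex_of_real ((cmod c)^2 / n)"
  proof -
    have "cnj c * c = complex_of_real ((cmod c)^2)" by (metis complex_norm_square mult.commute)
    thus ?thesis by (simp add: t_def)
  qed
  also have "(cmod t)^2 * n = (cmod c)^2 / n"
    using n by (simp add: t_def norm_divide power_divide power2_eq_square)
  finally have "(cmod c)^2 / n \<le> (norm x)^2" by simp
  hence "(cmod c)^2 \<le> (norm x)^2 * n" using n by (simp add: divide_le_eq)
  hence "(cmod c)^2 \<le> (norm x * norm y)^2" by (simp add: n_def power_mult_distrib)
  thus ?thesis unfolding c_def
    by (meson mult_nonneg_nonneg norm_ge_zero power2_le_imp_le)
qed

lemma cinner_ext_right: "(\<And>z. cinner z x = cinner z y) \<Longrightarrow> x = y"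
proof -
  assume h: "\<And>z. cinner z x = cinner z y"
  have "cinner (x - y) (x - y) = 0" using h[of "x-y"] by (simp add: cinner_diff_right)
  thus ?thesis by (simp add: cinner_self_eq_0)
qed

lemma bounded_linear_scaleC: "bounded_linear (scaleC c)"
proof (rule bounded_linear_intro[of _ "cmod c"])
  show "scaleC c (x + y) = scaleC c x + scaleC c y" for x y by (rule scaleC_add_right)
  show "scaleC c (scaleR r x) = scaleR r (scaleC c x)" for r x
    by (simp add: scaleR_scaleC scaleC_scaleC mult.commute)
  show "norm (scaleC c x) \<le> norm x * cmod c" for x
    by (simp add: norm_scaleC mult.commute)
qed

definition csubspace :: "'h::complex_hilbert set \<Rightarrow> bool" where
  "csubspace M \<longleftrightarrow> 0 \<in> M \<and> (\<forall>x\<in>M. \<forall>y\<in>M. x + y \<in> M) \<and> (\<forall>c. \<forall>x\<in>M. scaleC c x \<in> M)"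

lemma csubspace_diff: "csubspace M \<Longrightarrow> x \<in> M \<Longrightarrow> y \<in> M \<Longrightarrow> x - y \<in> M"
  unfolding csubspace_def
  by (metis diff_conv_add_uminus scaleC_minus_left scaleC_one)

lemma parallelogram:
  fixes a b :: "'h::complex_hilbert"
  shows "(norm (a + b))^2 + (norm (a - b))^2 = 2 * (norm a)^2 + 2 * (norm b)^2"
  by (simp add: norm_add_sq norm_diff_sq)

lemma proj_exists:
  fixes M :: "'h::complex_hilbert set" and v :: 'h
  assumes sub: "csubspace M" and cl: "closed M"
  shows "\<exists>m\<in>M. \<forall>y\<in>M. cinner (v - m) y = 0"
proof -
  have ne: "M \<noteq> {}" using sub by (auto simp: csubspace_def)
  define d where "d = infdist v M"
  have d0: "0 \<le> d" by (simp add: d_def infdist_nonneg)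
  have low: "d \<le> norm (v - y)" if "y \<in> M" for y
    using infdist_le[OF that, of v] by (simp add: d_def dist_norm)
  have approx: "\<exists>m\<in>M. (norm (v - m))^2 < d^2 + inverse (real (Suc n))" for n
  proof (rule ccontr)
    assume na: "\<not> ?thesis"
    define r where "r = sqrt (d^2 + inverse (real (Suc n)))"
    have r0: "0 \<le> r" by (simp add: r_def)
    have rsq: "r^2 = d^2 + inverse (real (Suc n))" by (simp add: r_def add_nonneg_nonneg)
    have "r \<le> dist v m" if "m \<in> M" for m
    proof -
      have "\<not> (norm (v - m))^2 < r^2" using na that rsq by auto
      hence "r^2 \<le> (norm (v - m))^2" by simp
      hence "r \<le> norm (v - m)" by (rule power2_le_imp_le) simp
      thus ?thesis by (simp add: dist_norm)
    qed
    hence "r \<le> (INF a\<in>M. dist v a)" by (rule cINF_greatest[OF ne])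
    hence "r \<le> d" unfolding d_def infdist_notempty[OF ne] .
    hence "r^2 \<le> d^2" using r0 by (rule power_mono)
    thus False using rsq by simp
  qed
  define m where "m n = (SOME x. x \<in> M \<and> (norm (v - x))^2 < d^2 + inverse (real (Suc n)))" for n
  have mm: "m n \<in> M \<and> (norm (v - m n))^2 < d^2 + inverse (real (Suc n))" for n
    unfolding m_def using approx[of n] by (rule someI_ex[OF bexE]) blast
  have mM: "\<And>n. m n \<in> M" and mb: "\<And>n. (norm (v - m n))^2 < d^2 + inverse (real (Suc n))"
    using mm by auto
  have dist_bound: "(norm (m n - m k))^2 \<le> 2 * inverse (real (Suc n)) + 2 * inverse (real (Suc k))" for n k
  proof -
    define mid where "mid = scaleR (1/2) (m n + m k)"
    have "mid \<in> M" using sub mM unfolding mid_def csubspace_def scaleR_scaleC by auto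
    hence dm: "d \<le> norm (v - mid)" by (rule low)
    have "(v - m n) + (v - m k) = scaleR 2 (v - mid)"
      by (simp add: mid_def algebra_simps scaleR_2)
    hence "norm ((v - m n) + (v - m k)) = 2 * norm (v - mid)" by simp
    hence h1: "4 * d^2 \<le> (norm ((v - m n) + (v - m k)))^2"
    proof -
      have "(2*d)^2 \<le> (2 * norm (v - mid))^2" using dm d0 by (intro power_mono) auto
      thus ?thesis using \<open>norm ((v - m n) + (v - m k)) = 2 * norm (v - mid)\<close>
        by (simp add: power_mult_distrib)
    qed
    have h2: "(v - m n) - (v - m k) = m k - m n" by simp
    have "(norm (m k - m n))^2 = 2 * (norm (v - m n))^2 + 2 * (norm (v - m k))^2
           - (norm ((v - m n) + (v - m k)))^2"
      using parallelogram[of "v - m n" "v - m k"] h2 by simp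
    thus ?thesis using h1 mb[of n] mb[of k] by (simp add: norm_minus_commute)
  qed
  have "Cauchy m"
  proof (rule metric_CauchyI)
    fix e :: real assume e: "0 < e"
    obtain N :: nat where N: "4 / e^2 < real N" using reals_Archimedean2 by blast
    have "inverse (real (Suc N)) < e^2 / 4"
    proof -
      have e2: "0 < e^2" using e by simp
      have "4 < real N * e^2" using N e2 by (simp add: field_simps)
      moreover have "real (Suc N) * e^2 = e^2 + real N * e^2" by (simp add: algebra_simps)
      ultimately have "4 < real (Suc N) * e^2" using e2 by linarith
      thus ?thesis using e2 by (simp add: inverse_eq_divide field_simps)
    qed
    have "dist (m a) (m b) < e" if "a \<ge> N" "b \<ge> N" for a b
    proof -
      have ia: "inverse (real (Suc a)) \<le> inverse (real (Suc N))"
        using that by (simp add: le_imp_inverse_le)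
      have ib: "inverse (real (Suc b)) \<le> inverse (real (Suc N))"
        using that by (simp add: le_imp_inverse_le)
      have "(dist (m a) (m b))^2 < e^2"
        unfolding dist_norm using dist_bound[of a b] ia ib \<open>inverse (real (Suc N)) < e^2 / 4\<close>
        by linarith
      thus ?thesis by (rule power2_less_imp_less) (use e in simp)
    qed
    thus "\<exists>M. \<forall>a\<ge>M. \<forall>b\<ge>M. dist (m a) (m b) < e" by blast
  qed
  then obtain l where lim: "m \<longlonglongrightarrow> l" using Cauchy_convergent_iff convergent_def by blast
  have lM: "l \<in> M" using cl lim mM closed_sequential_limits by blast
  have "(\<lambda>n. (norm (v - m n))^2) \<longlonglongrightarrow> (norm (v - l))^2"
    by (intro tendsto_intros lim)
  moreover have "(\<lambda>n. d^2 + inverse (real (Suc n))) \<longlonglongrightarrow> d^2 + 0"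
    by (intro tendsto_intros LIMSEQ_inverse_real_of_nat)
  moreover have "\<exists>N. \<forall>n\<ge>N. (norm (v - m n))^2 \<le> d^2 + inverse (real (Suc n))"
    using mb less_imp_le by blast
  ultimately have "(norm (v - l))^2 \<le> d^2 + 0"
    by (rule LIMSEQ_le)
  hence lmin: "(norm (v - l))^2 \<le> (norm (v - y))^2" if "y \<in> M" for y
  proof -
    have "d^2 \<le> (norm (v - y))^2" using low[OF that] d0 by (intro power_mono) auto
    thus ?thesis using \<open>(norm (v - l))^2 \<le> d^2 + 0\<close> by linarith
  qed
  have "cinner (v - l) y = 0" if yM: "y \<in> M" for y
  proof -
    define w where "w = v - l"
    define c where "c = cinner w y"
    define s where "s = 1 / ((norm y)^2 + 1)"
    have ny: "0 < (norm y)^2 + 1" by (simp add: add_nonneg_pos)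
    have s0: "0 < s" using ny by (simp add: s_def)
    have sy: "s * (norm y)^2 < 1" using ny by (simp add: s_def field_simps)
    define t where "t = complex_of_real s * cnj c"
    have "l + scaleC t y \<in> M" using sub lM yM by (simp add: csubspace_def)
    from lmin[OF this] have "(norm w)^2 \<le> (norm (w - scaleC t y))^2"
      by (simp add: w_def algebra_simps)
    also have "\<dots> = (norm w)^2 - 2 * Re (t * c) + (cmod t)^2 * (norm y)^2"
      by (simp add: norm_diff_scaleC_sq c_def)
    also have "t * c = complex_of_real (s * (cmod c)^2)"
    proof -
      have "cnj c * c = complex_of_real ((cmod c)^2)" by (metis complex_norm_square mult.commute)
      thus ?thesis by (simp add: t_def mult.assoc)
    qed
    also have "(cmod t)^2 = s^2 * (cmod c)^2"
      using s0 by (simp add: t_def norm_mult power_mult_distrib)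
    finally have "0 \<le> s * (cmod c)^2 * (s * (norm y)^2 - 2)"
      by (simp add: algebra_simps power2_eq_square)
    moreover have "s * (norm y)^2 - 2 < 0" using sy by simp
    ultimately have "s * (cmod c)^2 \<le> 0"
      by (smt (verit) mult_pos_neg)
    hence "(cmod c)^2 \<le> 0" using s0 by (simp add: mult_le_0_iff)
    thus ?thesis by (simp add: c_def w_def)
  qed
  thus ?thesis using lM by blast
qed

definition proj :: "'h::complex_hilbert set \<Rightarrow> 'h \<Rightarrow> 'h" where
  "proj M v = (SOME m. m \<in> M \<and> (\<forall>y\<in>M. cinner (v - m) y = 0))"

lemma proj:
  assumes "csubspace M" "closed M"
  shows "proj M v \<in> M \<and> (\<forall>y\<in>M. cinner (v - proj M v) y = 0)"
  unfolding proj_def using proj_exists[OF assms, of v] by (rule someI_ex[OF bexE]) blast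

lemma proj_unique:
  assumes sub: "csubspace M" and cl: "closed M" and m: "m \<in> M" and o: "\<forall>y\<in>M. cinner (v - m) y = 0"
  shows "proj M v = m"
proof -
  define p where "p = proj M v"
  have p: "p \<in> M" "\<forall>y\<in>M. cinner (v - p) y = 0" using proj[OF sub cl, of v] by (auto simp: p_def)
  have pm: "p - m \<in> M" using csubspace_diff[OF sub p(1) m] .
  have "cinner (v - m) (p - m) - cinner (v - p) (p - m) = 0" using o p(2) pm by simp
  hence "cinner (p - m) (p - m) = 0" by (simp add: cinner_diff_left)
  thus ?thesis by (simp add: cinner_self_eq_0 p_def)
qed

lemma riesz:
  fixes \<psi> :: "'h::complex_hilbert \<Rightarrow> complex"
  assumes add: "\<And>x y. \<psi> (x + y) = \<psi> x + \<psi> y"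
    and sc: "\<And>c x. \<psi> (scaleC c x) = c * \<psi> x"
    and bd: "\<And>x. cmod (\<psi> x) \<le> norm x * K"
  shows "\<exists>z. \<forall>x. \<psi> x = cinner z x"
proof (cases "\<forall>x. \<psi> x = 0")
  case True thus ?thesis by (intro exI[of _ 0]) simp
next
  case False
  then obtain w where w: "\<psi> w \<noteq> 0" by blast
  have z0: "\<psi> 0 = 0" using add[of 0 0] by simp
  have diff: "\<psi> (a - b) = \<psi> a - \<psi> b" for a b using add[of "a - b" b] by simp
  have bl: "bounded_linear \<psi>"
  proof (rule bounded_linear_intro[of _ K])
    show "\<psi> (x + y) = \<psi> x + \<psi> y" for x y by (rule add)
    show "\<psi> (scaleR r x) = scaleR r (\<psi> x)" for r x
      by (simp add: scaleR_scaleC sc scaleR_conv_of_real)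
    show "norm (\<psi> x) \<le> norm x * K" for x using bd by simp
  qed
  define Kr where "Kr = {x. \<psi> x = 0}"
  have cl: "closed Kr" unfolding Kr_def
    by (rule closed_Collect_eq) (auto intro: linear_continuous_on bl)
  have sub: "csubspace Kr" unfolding Kr_def csubspace_def using z0 add sc by auto
  define p where "p = proj Kr w"
  have p: "p \<in> Kr" "\<forall>y\<in>Kr. cinner (w - p) y = 0" using proj[OF sub cl, of w] by (auto simp: p_def)
  define u where "u = w - p"
  have pu: "\<psi> u \<noteq> 0" using w p(1) by (simp add: u_def diff Kr_def)
  have u0: "u \<noteq> 0" using pu z0 by auto
  have uu: "cinner u u \<noteq> 0" using u0 by (simp add: cinner_self_eq_0)
  define z where "z = scaleC (cnj (\<psi> u / cinner u u)) u"
  have "\<psi> x = cinner z x" for x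
  proof -
    define q where "q = \<psi> x / \<psi> u"
    have "x - scaleC q u \<in> Kr" using pu by (simp add: Kr_def diff sc q_def)
    hence "cinner u (x - scaleC q u) = 0" using p(2) by (simp add: u_def)
    hence ux: "cinner u x = q * cinner u u" by (simp add: cinner_diff_right cinner_scaleC_right)
    have "cinner z x = (\<psi> u / cinner u u) * cinner u x" by (simp add: z_def cinner_scaleC_left)
    also have "\<dots> = \<psi> x" using uu pu by (simp add: ux q_def)
    finally show ?thesis by simp
  qed
  thus ?thesis by blast
qed

section \<open>Bounded operators and adjoints\<close>

lemma bounded_opD:
  assumes "bounded_op f"
  shows "f (x + y) = f x + f y" "f (scaleC c x) = scaleC c (f x)" "\<exists>K\<ge>0. \<forall>x. norm (f x) \<le> norm x * K"
proof -
  show "f (x + y) = f x + f y" "f (scaleC c x) = scaleC c (f x)" using assms by (auto simp: bounded_op_def)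
  obtain K where K: "\<forall>x. norm (f x) \<le> norm x * K" using assms by (auto simp: bounded_op_def)
  have "norm (f x) \<le> norm x * \<bar>K\<bar>" for x
    using K[rule_format, of x] by (smt (verit) mult_left_mono norm_ge_zero)
  thus "\<exists>K\<ge>0. \<forall>x. norm (f x) \<le> norm x * K" by (intro exI[of _ "\<bar>K\<bar>"]) auto
qed

lemma bounded_op_zero: "bounded_op f \<Longrightarrow> f 0 = 0"
  using bounded_opD(1)[of f 0 0] by simp

lemma bounded_op_diff: "bounded_op f \<Longrightarrow> f (x - y) = f x - f y"
  using bounded_opD(1)[of f "x - y" y] by simp

lemma bounded_op_linear: "bounded_op f \<Longrightarrow> bounded_linear f"
proof -
  assume f: "bounded_op f"
  obtain K where K: "\<forall>x. norm (f x) \<le> norm x * K" using bounded_opD(3)[OF f] by blast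
  show ?thesis
  proof (rule bounded_linear_intro[of _ K])
    show "f (x + y) = f x + f y" for x y by (rule bounded_opD(1)[OF f])
    show "f (scaleR r x) = scaleR r (f x)" for r x by (simp add: scaleR_scaleC bounded_opD(2)[OF f])
    show "norm (f x) \<le> norm x * K" for x using K by simp
  qed
qed

lemma bounded_op_comp: "bounded_op a \<Longrightarrow> bounded_op b \<Longrightarrow> bounded_op (a \<circ> b)"
proof -
  assume a: "bounded_op a" and b: "bounded_op b"
  obtain Ka where Ka: "Ka \<ge> 0" "\<forall>x. norm (a x) \<le> norm x * Ka" using bounded_opD(3)[OF a] by blast
  obtain Kb where Kb: "Kb \<ge> 0" "\<forall>x. norm (b x) \<le> norm x * Kb" using bounded_opD(3)[OF b] by blast
  have "norm (a (b x)) \<le> norm x * (Kb * Ka)" for x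
  proof -
    have "norm (a (b x)) \<le> norm (b x) * Ka" using Ka by blast
    also have "\<dots> \<le> (norm x * Kb) * Ka" using Kb Ka by (intro mult_right_mono) auto
    finally show ?thesis by (simp add: mult.assoc)
  qed
  thus ?thesis using a b unfolding bounded_op_def by auto
qed

lemma bounded_op_add: "bounded_op a \<Longrightarrow> bounded_op b \<Longrightarrow> bounded_op (op_add a b)"
proof -
  assume a: "bounded_op a" and b: "bounded_op b"
  obtain Ka where Ka: "\<forall>x. norm (a x) \<le> norm x * Ka" using bounded_opD(3)[OF a] by blast
  obtain Kb where Kb: "\<forall>x. norm (b x) \<le> norm x * Kb" using bounded_opD(3)[OF b] by blast
  have "norm (a x + b x) \<le> norm x * (Ka + Kb)" for x
    using norm_triangle_ineq[of "a x" "b x"] Ka[rule_format, of x] Kb[rule_format, of x]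
    by (simp add: distrib_left)
  thus ?thesis using a b unfolding bounded_op_def op_add_def
    by (auto simp: scaleC_add_right add_ac)
qed

lemma bounded_op_scale: "bounded_op a \<Longrightarrow> bounded_op (op_scale c a)"
proof -
  assume a: "bounded_op a"
  obtain Ka where Ka: "Ka \<ge> 0" "\<forall>x. norm (a x) \<le> norm x * Ka" using bounded_opD(3)[OF a] by blast
  have "norm (scaleC c (a x)) \<le> norm x * (cmod c * Ka)" for x
  proof -
    have "cmod c * norm (a x) \<le> cmod c * (norm x * Ka)" using Ka by (intro mult_left_mono) auto
    thus ?thesis by (simp add: norm_scaleC mult_ac)
  qed
  hence "\<exists>K. \<forall>x. norm (scaleC c (a x)) \<le> norm x * K" by blast
  thus ?thesis using a unfolding bounded_op_def op_scale_def
    by (simp add: scaleC_add_right scaleC_scaleC mult.commute)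
qed

lemma bounded_op_id: "bounded_op id"
  unfolding bounded_op_def by (auto intro: exI[of _ 1])

lemma bounded_op_zero_op: "bounded_op zero_op"
  unfolding bounded_op_def zero_op_def by (auto intro: exI[of _ 0])

lemma adj_exists:
  assumes f: "bounded_op f"
  shows "\<exists>g. \<forall>x y. cinner (f x) y = cinner x (g y)"
proof -
  obtain K where K: "K \<ge> 0" "\<forall>x. norm (f x) \<le> norm x * K" using bounded_opD(3)[OF f] by blast
  have "\<exists>z. \<forall>x. cinner y (f x) = cinner z x" for y
  proof (rule riesz[where K = "norm y * K"])
    show "cinner y (f (x1 + x2)) = cinner y (f x1) + cinner y (f x2)" for x1 x2
      by (simp add: bounded_opD(1)[OF f] cinner_add_right)
    show "cinner y (f (scaleC c x)) = c * cinner y (f x)" for c x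
      by (simp add: bounded_opD(2)[OF f] cinner_scaleC_right)
    show "cmod (cinner y (f x)) \<le> norm x * (norm y * K)" for x
    proof -
      have "cmod (cinner y (f x)) \<le> norm y * norm (f x)" by (rule cauchy_schwarz)
      also have "\<dots> \<le> norm y * (norm x * K)" using K by (intro mult_left_mono) auto
      finally show ?thesis by (simp add: mult_ac)
    qed
  qed
  then obtain g where g: "\<forall>y x. cinner y (f x) = cinner (g y) x" using choice[of "\<lambda>y z. \<forall>x. cinner y (f x) = cinner z x"] by blast
  have "cinner (f x) y = cinner x (g y)" for x y
    using cinner_commute[of "f x" y] cinner_commute[of x "g y"] g by simp
  thus ?thesis by blast
qed

lemma adj_prop: "bounded_op f \<Longrightarrow> cinner (f x) y = cinner x (adj f y)"
  unfolding adj_def using someI_ex[OF adj_exists] by blast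

lemma adj_eqI:
  assumes g: "\<And>x y. cinner (a x) y = cinner x (g y)"
  shows "adj a = g"
proof -
  have ex: "\<exists>g. \<forall>x y. cinner (a x) y = cinner x (g y)" using g by blast
  have h: "\<forall>x y. cinner (a x) y = cinner x (adj a y)" unfolding adj_def by (rule someI_ex[OF ex])
  show ?thesis
  proof
    fix y show "adj a y = g y"
      by (rule cinner_ext_right) (metis g h)
  qed
qed

lemma adj_prop2: "bounded_op f \<Longrightarrow> cinner (adj f x) y = cinner x (f y)"
  using adj_prop[of f y x] cinner_commute[of "f y" x] cinner_commute[of y "adj f x"] by simp

lemma adj_adj: "bounded_op f \<Longrightarrow> adj (adj f) = f"
  by (rule adj_eqI) (rule adj_prop2)

lemma adj_bounded: assumes f: "bounded_op f" shows "bounded_op (adj f)"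
proof -
  obtain K where K: "K \<ge> 0" "\<forall>x. norm (f x) \<le> norm x * K" using bounded_opD(3)[OF f] by blast
  have add: "adj f (x + y) = adj f x + adj f y" for x y
    by (rule cinner_ext_right) (simp add: adj_prop[OF f, symmetric] cinner_add_right)
  have sc: "adj f (scaleC c x) = scaleC c (adj f x)" for c x
    by (rule cinner_ext_right) (simp add: adj_prop[OF f, symmetric] cinner_scaleC_right)
  have bd: "norm (adj f y) \<le> norm y * K" for y
  proof (cases "adj f y = 0")
    case True thus ?thesis using K by simp
  next
    case False
    have "(norm (adj f y))^2 = Re (cinner (f (adj f y)) y)"
      by (simp add: norm_sq_cinner adj_prop[OF f])
    also have "\<dots> \<le> cmod (cinner (f (adj f y)) y)" by (rule complex_Re_le_cmod)
    also have "\<dots> \<le> norm (f (adj f y)) * norm y" by (rule cauchy_schwarz)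
    also have "\<dots> \<le> (norm (adj f y) * K) * norm y" using K by (intro mult_right_mono) auto
    finally have "norm (adj f y) * norm (adj f y) \<le> norm (adj f y) * (norm y * K)"
      by (simp add: power2_eq_square mult_ac)
    thus ?thesis using False by simp
  qed
  show ?thesis unfolding bounded_op_def using add sc bd by blast
qed

lemma adj_comp: "bounded_op a \<Longrightarrow> bounded_op b \<Longrightarrow> adj (a \<circ> b) = adj b \<circ> adj a"
  by (rule adj_eqI) (simp add: adj_prop)

lemma adj_id: "adj id = (id :: 'h::complex_hilbert \<Rightarrow> 'h)"
  by (rule adj_eqI) simp

lemma adj_zero_op: "adj zero_op = (zero_op :: 'h::complex_hilbert \<Rightarrow> 'h)"
  by (rule adj_eqI) (simp add: zero_op_def)

lemma adj_add: "bounded_op a \<Longrightarrow> bounded_op b \<Longrightarrow> adj (op_add a b) = op_add (adj a) (adj b)"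
  by (rule adj_eqI) (simp add: op_add_def adj_prop cinner_add_left cinner_add_right)

lemma adj_scale: "bounded_op a \<Longrightarrow> adj (op_scale c a) = op_scale (cnj c) (adj a)"
  by (rule adj_eqI) (simp add: op_scale_def adj_prop cinner_scaleC_left cinner_scaleC_right)

lemma unitary_norm: "unitary u \<Longrightarrow> norm (u x) = norm x"
proof -
  assume u: "unitary u"
  have "(norm (u x))^2 = (norm x)^2"
    using u adj_prop[of u x "u x"] unfolding unitary_def
    by (simp add: norm_sq_cinner pointfree_idE)
  thus ?thesis by (simp add: power2_eq_iff_nonneg)
qed

lemma commutant_antimono: "S \<subseteq> T \<Longrightarrow> commutant T \<subseteq> commutant S"
  unfolding commutant_def by auto

lemma subset_double_commutant: "S \<subseteq> {f. bounded_op f} \<Longrightarrow> S \<subseteq> commutant (commutant S)"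
  unfolding commutant_def by auto

lemma comp_op_add_left: "op_add a b \<circ> c = op_add (a \<circ> c) (b \<circ> c)"
  by (simp add: op_add_def fun_eq_iff)

lemma comp_op_add_right: "bounded_op c \<Longrightarrow> c \<circ> op_add a b = op_add (c \<circ> a) (c \<circ> b)"
  by (simp add: op_add_def fun_eq_iff bounded_opD(1))

lemma comp_op_scale_left: "op_scale k a \<circ> c = op_scale k (a \<circ> c)"
  by (simp add: op_scale_def fun_eq_iff)

lemma comp_op_scale_right: "bounded_op c \<Longrightarrow> c \<circ> op_scale k a = op_scale k (c \<circ> a)"
  by (simp add: op_scale_def fun_eq_iff bounded_opD(2))

lemma commutant_star_subalgebra:
  assumes bS: "S \<subseteq> {f. bounded_op f}" and aS: "\<forall>a\<in>S. adj a \<in> S"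
  shows "star_subalgebra (commutant S)"
  unfolding star_subalgebra_def
proof (intro conjI ballI allI)
  show "commutant S \<subseteq> {f. bounded_op f}" unfolding commutant_def by auto
next
  fix a b assume a: "a \<in> commutant S" and b: "b \<in> commutant S"
  have ba: "bounded_op a" "bounded_op b" using a b by (auto simp: commutant_def)
  show "op_add a b \<in> commutant S" unfolding commutant_def
  proof (intro CollectI conjI ballI bounded_op_add ba)
    fix s assume s: "s \<in> S"
    hence "bounded_op s" using bS by auto
    thus "s \<circ> op_add a b = op_add a b \<circ> s" using a b s
      by (simp add: comp_op_add_left comp_op_add_right commutant_def)
  qed
  show "a \<circ> b \<in> commutant S" unfolding commutant_def
  proof (intro CollectI conjI ballI bounded_op_comp ba)
    fix s assume s: "s \<in> S"
    have "s \<circ> (a \<circ> b) = (s \<circ> a) \<circ> b" by (simp add: comp_assoc)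
    also have "\<dots> = a \<circ> (s \<circ> b)" using a s by (simp add: commutant_def comp_assoc)
    also have "\<dots> = (a \<circ> b) \<circ> s" using b s by (simp add: commutant_def comp_assoc)
    finally show "s \<circ> (a \<circ> b) = (a \<circ> b) \<circ> s" .
  qed
next
  fix c a assume a: "a \<in> commutant S"
  have ba: "bounded_op a" using a by (auto simp: commutant_def)
  show "op_scale c a \<in> commutant S" unfolding commutant_def
  proof (intro CollectI conjI ballI bounded_op_scale ba)
    fix s assume s: "s \<in> S"
    hence "bounded_op s" using bS by auto
    thus "s \<circ> op_scale c a = op_scale c a \<circ> s" using a s
      by (simp add: comp_op_scale_left comp_op_scale_right commutant_def)
  qed
next
  fix a assume a: "a \<in> commutant S"
  have ba: "bounded_op a" using a by (auto simp: commutant_def)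
  show "adj a \<in> commutant S" unfolding commutant_def
  proof (intro CollectI conjI ballI adj_bounded ba)
    fix s assume s: "s \<in> S"
    have bs: "bounded_op s" using bS s by auto
    have bs': "bounded_op (adj s)" using bS aS s by auto
    have comm: "adj s \<circ> a = a \<circ> adj s" using a aS s by (simp add: commutant_def)
    have "s \<circ> adj a = adj (adj s) \<circ> adj a" using adj_adj[OF bs] by simp
    also have "\<dots> = adj (a \<circ> adj s)" using adj_comp[OF ba bs'] by simp
    also have "\<dots> = adj (adj s \<circ> a)" using comm by simp
    also have "\<dots> = adj a \<circ> adj (adj s)" using adj_comp[OF bs' ba] by simp
    also have "\<dots> = adj a \<circ> s" using adj_adj[OF bs] by simp
    finally show "s \<circ> adj a = adj a \<circ> s" .
  qed
qed

lemma star_subalgebra_bounded: "star_subalgebra A \<Longrightarrow> a \<in> A \<Longrightarrow> bounded_op a"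
  unfolding star_subalgebra_def by auto

lemma star_alg_gen_least: "S \<subseteq> A \<Longrightarrow> star_subalgebra A \<Longrightarrow> star_alg_gen S \<subseteq> A"
  unfolding star_alg_gen_def by auto

lemma star_alg_gen_sub: "S \<subseteq> star_alg_gen S"
  unfolding star_alg_gen_def by auto

lemma star_alg_gen_star:
  assumes "S \<subseteq> A" "star_subalgebra A"
  shows "star_subalgebra (star_alg_gen S)"
  using assms unfolding star_alg_gen_def star_subalgebra_def
  by (auto simp: subset_eq)

locale rsys =
  fixes G :: "('g, 'm) monoid_scheme"
    and R :: "('h::complex_hilbert \<Rightarrow> 'h) set"
    and \<Omega> :: "'h"
    and U :: "'g \<Rightarrow> 'h \<Rightarrow> 'h"
  assumes rs: "represented_system G R \<Omega> U"
begin

lemma grp: "group G" using rs by (simp add: represented_system_def)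
lemma vN: "von_neumann_algebra R" using rs by (simp add: represented_system_def)
lemma R_star: "star_subalgebra R" using vN by (simp add: von_neumann_algebra_def)
lemma R_id: "id \<in> R" using vN by (simp add: von_neumann_algebra_def)
lemma R_dc: "commutant (commutant R) = R" using vN by (simp add: von_neumann_algebra_def)
lemma nOmega: "norm \<Omega> = 1" using rs by (simp add: represented_system_def)
lemma sep: "a \<in> R \<Longrightarrow> a \<Omega> = 0 \<Longrightarrow> a = zero_op" using rs by (simp add: represented_system_def)
lemma uni: "g \<in> carrier G \<Longrightarrow> unitary (U g)" using rs by (simp add: represented_system_def)
lemma Uhom: "g \<in> carrier G \<Longrightarrow> h \<in> carrier G \<Longrightarrow> U (g \<otimes>\<^bsub>G\<^esub> h) = U g \<circ> U h"
  using rs by (simp add: represented_system_def)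
lemma Uone: "U \<one>\<^bsub>G\<^esub> = id" using rs by (simp add: represented_system_def)
lemma Ufix: "g \<in> carrier G \<Longrightarrow> U g \<Omega> = \<Omega>" using rs by (simp add: represented_system_def)

lemma Ub: "g \<in> carrier G \<Longrightarrow> bounded_op (U g)" using uni by (simp add: unitary_def)

lemma R_bounded: "a \<in> R \<Longrightarrow> bounded_op a" using R_star star_subalgebra_bounded by blast

lemma adjU: assumes g: "g \<in> carrier G" shows "adj (U g) = U (inv\<^bsub>G\<^esub> g)"
proof -
  have ig: "inv\<^bsub>G\<^esub> g \<in> carrier G" using g grp by (simp add: group.inv_closed)
  have r: "U g \<circ> U (inv\<^bsub>G\<^esub> g) = id" using Uhom[OF g ig] g grp Uone by (simp add: group.r_inv)
  have l: "adj (U g) \<circ> U g = id" using uni[OF g] by (simp add: unitary_def)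
  have "adj (U g) = adj (U g) \<circ> (U g \<circ> U (inv\<^bsub>G\<^esub> g))" using r by simp
  also have "\<dots> = U (inv\<^bsub>G\<^esub> g)" using l by (simp add: comp_assoc[symmetric])
  finally show ?thesis .
qed

lemma adjU_Omega: "g \<in> carrier G \<Longrightarrow> adj (U g) \<Omega> = \<Omega>"
  using adjU Ufix grp by (simp add: group.inv_closed)

lemma UadjU: "g \<in> carrier G \<Longrightarrow> U g (adj (U g) x) = x"
  using uni by (simp add: unitary_def pointfree_idE)

lemma adjUU: "g \<in> carrier G \<Longrightarrow> adj (U g) (U g x) = x"
  using uni by (simp add: unitary_def pointfree_idE)

lemma adjUb: "g \<in> carrier G \<Longrightarrow> bounded_op (adj (U g))"
  using Ub adj_bounded by blast

lemma alpha_bounded: "g \<in> carrier G \<Longrightarrow> bounded_op a \<Longrightarrow> bounded_op (alpha U g a)"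
  unfolding alpha_def by (intro bounded_op_comp Ub adjUb)

lemma alpha_comp: "g \<in> carrier G \<Longrightarrow> alpha U g (a \<circ> b) = alpha U g a \<circ> alpha U g b"
  by (simp add: alpha_def fun_eq_iff adjUU)

lemma alpha_add: "g \<in> carrier G \<Longrightarrow> alpha U g (op_add a b) = op_add (alpha U g a) (alpha U g b)"
  by (simp add: alpha_def fun_eq_iff op_add_def bounded_opD(1)[OF Ub])

lemma alpha_scale: "g \<in> carrier G \<Longrightarrow> alpha U g (op_scale c a) = op_scale c (alpha U g a)"
  by (simp add: alpha_def fun_eq_iff op_scale_def bounded_opD(2)[OF Ub])

lemma alpha_zero: "g \<in> carrier G \<Longrightarrow> alpha U g zero_op = zero_op"
  by (simp add: alpha_def fun_eq_iff zero_op_def bounded_op_zero[OF Ub])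

lemma alpha_id: "g \<in> carrier G \<Longrightarrow> alpha U g id = id"
  by (simp add: alpha_def fun_eq_iff UadjU)

lemma alpha_adj: assumes g: "g \<in> carrier G" and a: "bounded_op a"
  shows "alpha U g (adj a) = adj (alpha U g a)"
proof -
  have "adj (alpha U g a) = adj (U g \<circ> (a \<circ> adj (U g)))" by (simp add: alpha_def comp_assoc)
  also have "\<dots> = adj (a \<circ> adj (U g)) \<circ> adj (U g)"
    by (intro adj_comp Ub g bounded_op_comp a adjUb)
  also have "\<dots> = (adj (adj (U g)) \<circ> adj a) \<circ> adj (U g)"
    by (subst adj_comp) (auto intro: a adjUb g)
  also have "\<dots> = alpha U g (adj a)" by (simp add: adj_adj[OF Ub[OF g]] alpha_def)
  finally show ?thesis by simp
qed

lemma alpha_inv: assumes g: "g \<in> carrier G"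
  shows "alpha U g (alpha U (inv\<^bsub>G\<^esub> g) a) = a"
proof -
  have ig: "inv\<^bsub>G\<^esub> g \<in> carrier G" using g grp by (simp add: group.inv_closed)
  have "adj (U (inv\<^bsub>G\<^esub> g)) = U g" using adjU[OF ig] g grp by (simp add: group.inv_inv)
  moreover have e: "\<And>x. U g (U (inv\<^bsub>G\<^esub> g) x) = x" using UadjU[OF g] adjU[OF g] by simp
  ultimately show ?thesis using adjU[OF g] by (simp add: alpha_def fun_eq_iff)
qed

lemma commutant_invariant:
  assumes inv: "\<forall>g\<in>carrier G. \<forall>a\<in>S. alpha U g a \<in> S"
  shows "\<forall>g\<in>carrier G. \<forall>s\<in>commutant S. alpha U g s \<in> commutant S"
proof (intro ballI)
  fix g s assume g: "g \<in> carrier G" and s: "s \<in> commutant S"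
  have ig: "inv\<^bsub>G\<^esub> g \<in> carrier G" using g grp by (simp add: group.inv_closed)
  have bs: "bounded_op s" using s by (simp add: commutant_def)
  show "alpha U g s \<in> commutant S" unfolding commutant_def
  proof (intro CollectI conjI ballI alpha_bounded g bs)
    fix c assume c: "c \<in> S"
    define d where "d = alpha U (inv\<^bsub>G\<^esub> g) c"
    have d: "d \<in> S" using inv ig c by (simp add: d_def)
    have cd: "c = alpha U g d" using alpha_inv[OF g] by (simp add: d_def)
    have "c \<circ> alpha U g s = alpha U g (d \<circ> s)" by (simp add: cd alpha_comp[OF g])
    also have "d \<circ> s = s \<circ> d" using s d by (simp add: commutant_def)
    also have "alpha U g (s \<circ> d) = alpha U g s \<circ> c" by (simp add: cd alpha_comp[OF g])
    finally show "c \<circ> alpha U g s = alpha U g s \<circ> c" .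
  qed
qed

end

context rsys begin

definition "Bset = {a. eigenoperator G R U a} \<union> {zero_op}"
definition "Cset = star_alg_gen Bset"
definition "Nset = commutant (commutant Cset)"

lemma zero_R: "zero_op \<in> R"
proof -
  have "op_scale 0 id \<in> R" using R_star R_id by (simp add: star_subalgebra_def)
  moreover have "op_scale 0 id = zero_op" by (simp add: op_scale_def zero_op_def fun_eq_iff)
  ultimately show ?thesis by metis
qed

lemma B_R: "Bset \<subseteq> R" using zero_R by (auto simp: Bset_def eigenoperator_def)

lemma C_R: "Cset \<subseteq> R" unfolding Cset_def by (rule star_alg_gen_least[OF B_R R_star])

lemma C_star: "star_subalgebra Cset" unfolding Cset_def by (rule star_alg_gen_star[OF B_R R_star])

lemma B_C: "Bset \<subseteq> Cset" unfolding Cset_def by (rule star_alg_gen_sub)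

lemma C_bounded: "Cset \<subseteq> {f. bounded_op f}" using C_star by (simp add: star_subalgebra_def)

lemma C_adj: "\<forall>a\<in>Cset. adj a \<in> Cset" using C_star by (simp add: star_subalgebra_def)

lemma C'_star: "star_subalgebra (commutant Cset)"
  by (rule commutant_star_subalgebra[OF C_bounded C_adj])

lemma N_star: "star_subalgebra Nset" unfolding Nset_def
  by (rule commutant_star_subalgebra) (use C'_star in \<open>auto simp: star_subalgebra_def\<close>)

lemma N_R: "Nset \<subseteq> R"
proof -
  have "commutant R \<subseteq> commutant Cset" by (rule commutant_antimono[OF C_R])
  hence "Nset \<subseteq> commutant (commutant R)" unfolding Nset_def by (rule commutant_antimono)
  thus ?thesis using R_dc by simp
qed

lemma C_invariant: "\<forall>g\<in>carrier G. \<forall>a\<in>Cset. alpha U g a \<in> Cset"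
proof -
  define D where "D = {a \<in> Cset. \<forall>g\<in>carrier G. alpha U g a \<in> Cset}"
  have Cb: "\<And>a. a \<in> Cset \<Longrightarrow> bounded_op a" using C_bounded by auto
  have cl: "\<And>a b. a \<in> Cset \<Longrightarrow> b \<in> Cset \<Longrightarrow> op_add a b \<in> Cset \<and> a \<circ> b \<in> Cset"
    "\<And>a c. a \<in> Cset \<Longrightarrow> op_scale c a \<in> Cset" "\<And>a. a \<in> Cset \<Longrightarrow> adj a \<in> Cset"
    using C_star by (auto simp: star_subalgebra_def)
  have "star_subalgebra D" unfolding star_subalgebra_def D_def
    using Cb cl by (auto simp: alpha_add alpha_scale alpha_comp alpha_adj)
  moreover have "Bset \<subseteq> D"
  proof
    fix a assume a: "a \<in> Bset"
    have aC: "a \<in> Cset" using a B_C by auto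
    have "alpha U g a \<in> Cset" if g: "g \<in> carrier G" for g
    proof (cases "a = zero_op")
      case True thus ?thesis using g alpha_zero aC by simp
    next
      case False
      then obtain lam where "\<forall>g\<in>carrier G. alpha U g a = op_scale (lam g) a"
        using a by (auto simp: Bset_def eigenoperator_def)
      thus ?thesis using g cl(2)[OF aC] by simp
    qed
    thus "a \<in> D" using aC by (simp add: D_def)
  qed
  ultimately have "Cset \<subseteq> D" unfolding Cset_def by (rule star_alg_gen_least[rotated])
  thus ?thesis by (auto simp: D_def)
qed

lemma N_invariant: "\<forall>g\<in>carrier G. \<forall>a\<in>Nset. alpha U g a \<in> Nset"
  unfolding Nset_def by (intro commutant_invariant C_invariant)

lemma Omega_ne: "\<Omega> \<noteq> 0" using nOmega by auto

lemma id_B: "id \<in> Bset"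
proof -
  have "id \<noteq> (zero_op :: 'h \<Rightarrow> 'h)"
    using Omega_ne by (auto simp: zero_op_def fun_eq_iff)
  moreover have "\<forall>g\<in>carrier G. alpha U g id = op_scale ((\<lambda>_. 1) g) id"
  proof -
    have "op_scale 1 id = (id :: 'h \<Rightarrow> 'h)" by (simp add: op_scale_def scaleC_one fun_eq_iff)
    thus ?thesis using alpha_id by simp
  qed
  ultimately have "eigenoperator G R U id" using R_id unfolding eigenoperator_def
    by (intro conjI exI[of _ "\<lambda>_. 1"]) auto
  thus ?thesis unfolding Bset_def by blast
qed

lemma id_C: "id \<in> Cset" using id_B B_C by auto

end

lemma closure_plus_closed:
  fixes S :: "'a::real_normed_vector set"
  assumes S: "\<forall>x\<in>S. \<forall>y\<in>S. x + y \<in> S" and x: "x \<in> closure S" and y: "y \<in> closure S"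
  shows "x + y \<in> closure S"
proof -
  obtain f where f: "\<forall>n. f n \<in> S" "f \<longlonglongrightarrow> x" using x closure_sequential by blast
  obtain g where g: "\<forall>n. g n \<in> S" "g \<longlonglongrightarrow> y" using y closure_sequential by blast
  have "\<forall>n. f n + g n \<in> S" using f g S by auto
  moreover have "(\<lambda>n. f n + g n) \<longlonglongrightarrow> x + y" using f g by (intro tendsto_add) auto
  ultimately show ?thesis unfolding closure_sequential by (intro exI[of _ "\<lambda>n. f n + g n"]) simp
qed

lemma closure_map_closed:
  fixes S :: "'a::real_normed_vector set"
  assumes bl: "bounded_linear h" and S: "\<forall>x\<in>S. h x \<in> S" and x: "x \<in> closure S"
  shows "h x \<in> closure S"
proof -
  have "h ` closure S \<subseteq> closure S"
  proof (rule image_closure_subset)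
    show "continuous_on (closure S) h" by (rule linear_continuous_on[OF bl])
    show "h ` S \<subseteq> closure S" using S closure_subset by blast
  qed simp
  thus ?thesis using x by auto
qed

context rsys begin

definition "Mset = closure {c \<Omega> | c. c \<in> Cset}"

lemma C_closed: "a \<in> Cset \<Longrightarrow> b \<in> Cset \<Longrightarrow> op_add a b \<in> Cset" "a \<in> Cset \<Longrightarrow> b \<in> Cset \<Longrightarrow> a \<circ> b \<in> Cset"
    "a \<in> Cset \<Longrightarrow> op_scale c a \<in> Cset" "a \<in> Cset \<Longrightarrow> adj a \<in> Cset" "a \<in> Cset \<Longrightarrow> bounded_op a"
  using C_star by (auto simp: star_subalgebra_def)

lemma COmegaI: "c \<in> Cset \<Longrightarrow> v = c \<Omega> \<Longrightarrow> v \<in> {c \<Omega> | c. c \<in> Cset}"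
  by auto

lemma M_sub: "csubspace Mset"
  unfolding csubspace_def Mset_def
proof (intro conjI ballI allI)
  have "zero_op \<in> Cset" using B_C by (auto simp: Bset_def)
  moreover have "(0::'h) = zero_op \<Omega>" by (simp add: zero_op_def)
  ultimately have "0 \<in> {c \<Omega> | c. c \<in> Cset}" by (rule COmegaI)
  thus "0 \<in> closure {c \<Omega> | c. c \<in> Cset}" by (rule closure_subset[THEN subsetD])
next
  fix x y assume "x \<in> closure {c \<Omega> | c. c \<in> Cset}" "y \<in> closure {c \<Omega> | c. c \<in> Cset}"
  moreover have "\<forall>x\<in>{c \<Omega> | c. c \<in> Cset}. \<forall>y\<in>{c \<Omega> | c. c \<in> Cset}. x + y \<in> {c \<Omega> | c. c \<in> Cset}"
  proof (intro ballI)
    fix x y assume "x \<in> {c \<Omega> | c. c \<in> Cset}" "y \<in> {c \<Omega> | c. c \<in> Cset}"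
    then obtain a b where "a \<in> Cset" "b \<in> Cset" "x = a \<Omega>" "y = b \<Omega>" by auto
    moreover hence "x + y = op_add a b \<Omega>" by (simp add: op_add_def)
    ultimately show "x + y \<in> {c \<Omega> | c. c \<in> Cset}" using C_closed(1) by (intro COmegaI) auto
  qed
  ultimately show "x + y \<in> closure {c \<Omega> | c. c \<in> Cset}" by (rule closure_plus_closed[rotated 1])
next
  fix k x assume x: "x \<in> closure {c \<Omega> | c. c \<in> Cset}"
  have "\<forall>x\<in>{c \<Omega> | c. c \<in> Cset}. scaleC k x \<in> {c \<Omega> | c. c \<in> Cset}"
  proof (intro ballI)
    fix x assume "x \<in> {c \<Omega> | c. c \<in> Cset}"
    then obtain a where "a \<in> Cset" "x = a \<Omega>" by auto
    moreover hence "scaleC k x = op_scale k a \<Omega>" by (simp add: op_scale_def)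
    ultimately show "scaleC k x \<in> {c \<Omega> | c. c \<in> Cset}" using C_closed(3) by (intro COmegaI) auto
  qed
  thus "scaleC k x \<in> closure {c \<Omega> | c. c \<in> Cset}"
    by (intro closure_map_closed[OF bounded_linear_scaleC] x)
qed

lemma M_closed: "closed Mset" by (simp add: Mset_def)

lemma C_maps_M: assumes c: "c \<in> Cset" and x: "x \<in> Mset" shows "c x \<in> Mset"
proof -
  have "\<forall>x\<in>{c \<Omega> | c. c \<in> Cset}. c x \<in> {c \<Omega> | c. c \<in> Cset}"
  proof (intro ballI)
    fix x assume "x \<in> {c \<Omega> | c. c \<in> Cset}"
    then obtain a where "a \<in> Cset" "x = a \<Omega>" by auto
    moreover have "c x = (c \<circ> a) \<Omega>" using \<open>x = a \<Omega>\<close> by simp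
    ultimately show "c x \<in> {c \<Omega> | c. c \<in> Cset}" by (intro COmegaI[OF C_closed(2)[OF c]]) auto
  qed
  thus ?thesis using x unfolding Mset_def
    by (intro closure_map_closed[OF bounded_op_linear[OF C_closed(5)[OF c]]])
qed

definition "Pop = proj Mset"

lemma P: "Pop v \<in> Mset" "y \<in> Mset \<Longrightarrow> cinner (v - Pop v) y = 0"
  using proj[OF M_sub M_closed, of v] by (auto simp: Pop_def)

lemma P_unique: "m \<in> Mset \<Longrightarrow> \<forall>y\<in>Mset. cinner (v - m) y = 0 \<Longrightarrow> Pop v = m"
  unfolding Pop_def by (rule proj_unique[OF M_sub M_closed])

lemma P_add: "Pop (x + y) = Pop x + Pop y"
proof -
  have m: "Pop x + Pop y \<in> Mset" using M_sub P(1)[of x] P(1)[of y] unfolding csubspace_def by blast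
  have o: "\<forall>z\<in>Mset. cinner (x + y - (Pop x + Pop y)) z = 0"
  proof
    fix z assume z: "z \<in> Mset"
    have e: "x + y - (Pop x + Pop y) = (x - Pop x) + (y - Pop y)" by (simp add: algebra_simps)
    have "cinner (x + y - (Pop x + Pop y)) z = cinner (x - Pop x) z + cinner (y - Pop y) z"
      unfolding e by (rule cinner_add_left)
    also have "\<dots> = 0" unfolding P(2)[OF z, of x] P(2)[OF z, of y] by simp
    finally show "cinner (x + y - (Pop x + Pop y)) z = 0" .
  qed
  show ?thesis by (rule P_unique[OF m o])
qed

lemma P_scale: "Pop (scaleC c x) = scaleC c (Pop x)"
proof -
  have m: "scaleC c (Pop x) \<in> Mset" using M_sub P(1)[of x] unfolding csubspace_def by blast
  have o: "\<forall>z\<in>Mset. cinner (scaleC c x - scaleC c (Pop x)) z = 0"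
  proof
    fix z assume z: "z \<in> Mset"
    have e: "scaleC c x - scaleC c (Pop x) = scaleC c (x - Pop x)" by (rule scaleC_diff_right[symmetric])
    show "cinner (scaleC c x - scaleC c (Pop x)) z = 0"
      unfolding e cinner_scaleC_left P(2)[OF z, of x] by (rule mult_zero_right)
  qed
  show ?thesis by (rule P_unique[OF m o])
qed

lemma P_norm: "norm (Pop x) \<le> norm x * 1"
proof -
  have o: "cinner (Pop x) (x - Pop x) = 0"
  proof -
    have "cinner (x - Pop x) (Pop x) = 0" by (rule P(2)[OF P(1)])
    thus ?thesis using cinner_commute[of "Pop x" "x - Pop x"] by (simp only: complex_cnj_zero)
  qed
  have e0: "x = Pop x + (x - Pop x)" by simp
  have e: "(norm x)^2 = (norm (Pop x))^2 + 2 * Re (cinner (Pop x) (x - Pop x)) + (norm (x - Pop x))^2"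
    by (subst e0, rule norm_add_sq)
  hence e: "(norm x)^2 = (norm (Pop x))^2 + (norm (x - Pop x))^2" unfolding o by simp
  have "(norm (Pop x))^2 \<le> (norm x)^2" using e zero_le_power2[of "norm (x - Pop x)"] by linarith
  hence "norm (Pop x) \<le> norm x" by (rule power2_le_imp_le) simp
  thus ?thesis by simp
qed

lemma P_bounded: "bounded_op Pop"
  unfolding bounded_op_def using P_add P_scale P_norm by blast

lemma P_comm: assumes c: "c \<in> Cset" shows "c \<circ> Pop = Pop \<circ> c"
proof
  fix v
  have bc: "bounded_op c" using C_closed(5)[OF c] .
  have "Pop (c v) = c (Pop v)"
  proof (rule P_unique)
    show "c (Pop v) \<in> Mset" by (rule C_maps_M[OF c P(1)])
    show "\<forall>y\<in>Mset. cinner (c v - c (Pop v)) y = 0"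
    proof
      fix y assume y: "y \<in> Mset"
      have "cinner (c v - c (Pop v)) y = cinner (c (v - Pop v)) y" by (simp add: bounded_op_diff[OF bc])
      also have "\<dots> = cinner (v - Pop v) (adj c y)" by (rule adj_prop[OF bc])
      also have "\<dots> = 0" by (rule P(2)[OF C_maps_M[OF C_closed(4)[OF c] y]])
      finally show "cinner (c v - c (Pop v)) y = 0" .
    qed
  qed
  thus "(c \<circ> Pop) v = (Pop \<circ> c) v" by simp
qed

lemma P_C': "Pop \<in> commutant Cset"
  unfolding commutant_def using P_bounded P_comm by auto

lemma Omega_M: "\<Omega> \<in> Mset"
proof -
  have "\<Omega> = id \<Omega>" by simp
  hence "\<Omega> \<in> {c \<Omega> | c. c \<in> Cset}" using id_C by (intro COmegaI)
  thus ?thesis unfolding Mset_def by (rule closure_subset[THEN subsetD])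
qed

lemma P_Omega: "Pop \<Omega> = \<Omega>"
  by (rule P_unique[OF Omega_M]) simp

lemma N_Omega: assumes a: "a \<in> Nset" shows "a \<Omega> \<in> Mset"
proof -
  have "a \<circ> Pop = Pop \<circ> a" using a P_C' by (auto simp: Nset_def commutant_def)
  hence "a (Pop \<Omega>) = Pop (a \<Omega>)" by (metis comp_apply)
  thus ?thesis using P(1) P_Omega by metis
qed

end

primrec sumop :: "('h::complex_hilbert \<Rightarrow> 'h) list \<Rightarrow> ('h \<Rightarrow> 'h)" where
  "sumop [] = zero_op"
| "sumop (a # xs) = op_add a (sumop xs)"

lemma sumop_apply: "sumop (a # xs) x = a x + sumop xs x" "sumop [] x = 0"
  by (simp_all add: op_add_def zero_op_def)

lemma sumop_single: "sumop [a] = a"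
  by (simp add: fun_eq_iff op_add_def zero_op_def)

lemma sumop_append: "sumop (xs @ ys) = op_add (sumop xs) (sumop ys)"
  by (induction xs) (simp_all add: fun_eq_iff op_add_def zero_op_def add.assoc)

lemma sumop_scale: "sumop (map (op_scale c) xs) = op_scale c (sumop xs)"
  by (induction xs) (simp_all add: fun_eq_iff op_add_def zero_op_def op_scale_def scaleC_add_right)

lemma sumop_comp_left: "bounded_op c \<Longrightarrow> c \<circ> sumop ys = sumop (map ((\<circ>) c) ys)"
  by (induction ys) (simp_all add: fun_eq_iff op_add_def zero_op_def bounded_opD(1) bounded_op_zero)

lemma sumop_bounded: "\<forall>a\<in>set xs. bounded_op a \<Longrightarrow> bounded_op (sumop xs)"
  by (induction xs) (simp_all add: bounded_op_zero_op bounded_op_add)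

lemma adj_sumop: "\<forall>a\<in>set xs. bounded_op a \<Longrightarrow> adj (sumop xs) = sumop (map adj xs)"
  by (induction xs) (simp_all add: adj_zero_op adj_add sumop_bounded)

lemma sumop_mult:
  "\<forall>a\<in>set xs. bounded_op a \<Longrightarrow> sumop xs \<circ> sumop ys = sumop (concat (map (\<lambda>a. map ((\<circ>) a) ys) xs))"
proof (induction xs)
  case Nil thus ?case by (simp add: fun_eq_iff zero_op_def)
next
  case (Cons a xs)
  have "sumop (a # xs) \<circ> sumop ys = op_add (a \<circ> sumop ys) (sumop xs \<circ> sumop ys)"
    by (simp add: comp_op_add_left)
  also have "a \<circ> sumop ys = sumop (map ((\<circ>) a) ys)" using Cons.prems by (simp add: sumop_comp_left)
  also have "sumop xs \<circ> sumop ys = sumop (concat (map (\<lambda>a. map ((\<circ>) a) ys) xs))"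
    by (rule Cons.IH) (use Cons.prems in simp)
  finally show ?case by (simp only: list.map concat.simps sumop_append)
qed

primrec Tset :: "('h::complex_hilbert \<Rightarrow> 'h) list \<Rightarrow> ('h \<Rightarrow> 'h) set" where
  "Tset [] = {zero_op}"
| "Tset (a # xs) = {op_add (op_scale \<mu> a) s | \<mu> s. cmod \<mu> = 1 \<and> s \<in> Tset xs}"

lemma tb_mono: "totally_bounded_Omega \<Omega> S \<Longrightarrow> T \<subseteq> S \<Longrightarrow> totally_bounded_Omega \<Omega> T"
  unfolding totally_bounded_Omega_def by (meson subsetD)

lemma tb_Tset: "totally_bounded_Omega \<Omega> (Tset xs)"
proof (induction xs)
  case Nil
  show ?case unfolding totally_bounded_Omega_def
  proof (intro allI impI)
    fix e :: real assume e: "0 < e"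
    have "\<forall>a\<in>Tset []. \<exists>b\<in>{zero_op}. omega_norm \<Omega> (\<lambda>x. a x - b x) < e"
      using e by (simp add: omega_norm_def)
    thus "\<exists>k. finite k \<and> (\<forall>a\<in>Tset []. \<exists>b\<in>k. omega_norm \<Omega> (\<lambda>x. a x - b x) < e)"
      by (intro exI[of _ "{zero_op}"]) simp
  qed
next
  case (Cons a xs)
  show ?case unfolding totally_bounded_Omega_def
  proof (intro allI impI)
    fix e :: real assume e: "0 < e"
    obtain k2 where k2: "finite k2" "\<forall>s\<in>Tset xs. \<exists>b\<in>k2. omega_norm \<Omega> (\<lambda>x. s x - b x) < e/2"
      using Cons.IH e unfolding totally_bounded_Omega_def by (meson half_gt_zero)
    define na where "na = norm (a \<Omega>)"
    define \<delta> where "\<delta> = e / (2 * (na + 1))"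
    have na0: "0 \<le> na" by (simp add: na_def)
    have \<delta>0: "0 < \<delta>" using e na0 by (simp add: \<delta>_def)
    obtain k where k: "finite k" "k \<subseteq> sphere (0::complex) 1" "sphere (0::complex) 1 \<subseteq> \<Union>((\<lambda>x. ball x \<delta>) ` k)"
    proof -
      have "sphere (0::complex) 1 \<subseteq> (\<Union>c\<in>sphere 0 1. ball c \<delta>)" using \<delta>0 by auto
      then obtain C' where "C' \<subseteq> sphere (0::complex) 1" "finite C'" "sphere (0::complex) 1 \<subseteq> (\<Union>c\<in>C'. ball c \<delta>)"
        using compactE_image[OF compact_sphere[of "0::complex" 1], of "sphere 0 1" "\<lambda>c. ball c \<delta>"] by auto
      thus ?thesis using that by blast
    qed
    define K where "K = (\<lambda>(\<nu>, b). op_add (op_scale \<nu> a) b) ` (k \<times> k2)"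
    have fK: "finite K" using k(1) k2(1) by (simp add: K_def)
    have "\<exists>b\<in>K. omega_norm \<Omega> (\<lambda>x. t x - b x) < e" if t: "t \<in> Tset (a # xs)" for t
    proof -
      obtain \<mu> s where t': "t = op_add (op_scale \<mu> a) s" "cmod \<mu> = 1" "s \<in> Tset xs"
        using t by auto
      have "\<mu> \<in> sphere 0 1" using t'(2) by simp
      then obtain \<nu> where \<nu>: "\<nu> \<in> k" "\<mu> \<in> ball \<nu> \<delta>" using k(3) by blast
      obtain b2 where b2: "b2 \<in> k2" "omega_norm \<Omega> (\<lambda>x. s x - b2 x) < e/2" using k2(2) t'(3) by blast
      have inK: "op_add (op_scale \<nu> a) b2 \<in> K" using \<nu>(1) b2(1) unfolding K_def by force
      have d: "cmod (\<mu> - \<nu>) < \<delta>" using \<nu>(2) by (simp add: dist_norm norm_minus_commute)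
      have "t \<Omega> - op_add (op_scale \<nu> a) b2 \<Omega> = scaleC (\<mu> - \<nu>) (a \<Omega>) + (s \<Omega> - b2 \<Omega>)"
        by (simp add: t'(1) op_add_def op_scale_def scaleC_diff_left algebra_simps)
      hence "norm (t \<Omega> - op_add (op_scale \<nu> a) b2 \<Omega>) \<le> cmod (\<mu> - \<nu>) * na + norm (s \<Omega> - b2 \<Omega>)"
        using norm_triangle_ineq[of "scaleC (\<mu> - \<nu>) (a \<Omega>)" "s \<Omega> - b2 \<Omega>"]
        by (simp add: norm_scaleC na_def)
      moreover have "cmod (\<mu> - \<nu>) * na \<le> \<delta> * na" using d na0 by (simp add: mult_right_mono)
      moreover have "\<delta> * na < e / 2"
      proof -
        have "\<delta> * na = e / 2 * (na / (na + 1))" using na0 by (simp add: \<delta>_def field_simps)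
        also have "\<dots> < e / 2 * 1" using e na0 by (intro mult_strict_left_mono) auto
        finally show ?thesis by simp
      qed
      moreover have "norm (s \<Omega> - b2 \<Omega>) < e/2" using b2(2) by (simp add: omega_norm_def)
      ultimately have "norm (t \<Omega> - op_add (op_scale \<nu> a) b2 \<Omega>) < e" by linarith
      thus ?thesis using inK by (intro bexI[of _ "op_add (op_scale \<nu> a) b2"]) (simp_all add: omega_norm_def)
    qed
    thus "\<exists>K. finite K \<and> (\<forall>t\<in>Tset (a # xs). \<exists>b\<in>K. omega_norm \<Omega> (\<lambda>x. t x - b x) < e)"
      using fK by blast
  qed
qed

context rsys begin

definition "Bu = {a \<in> R. \<exists>lam. \<forall>g\<in>carrier G. alpha U g a = op_scale (lam g) a \<and> cmod (lam g) = 1}"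

lemma Bu_R: "a \<in> Bu \<Longrightarrow> a \<in> R" by (simp add: Bu_def)

lemma Bu_bounded: "a \<in> Bu \<Longrightarrow> bounded_op a" using Bu_R R_bounded by blast

lemma R_closed: "a \<in> R \<Longrightarrow> b \<in> R \<Longrightarrow> a \<circ> b \<in> R" "a \<in> R \<Longrightarrow> op_scale c a \<in> R" "a \<in> R \<Longrightarrow> adj a \<in> R"
  using R_star by (auto simp: star_subalgebra_def)

lemma op_scale_comm: "op_scale c (op_scale d a) = op_scale d (op_scale c a)"
  by (simp add: op_scale_def scaleC_scaleC mult.commute)

lemma Bu_scale: assumes a: "a \<in> Bu" shows "op_scale c a \<in> Bu"
proof -
  obtain lam where lam: "\<forall>g\<in>carrier G. alpha U g a = op_scale (lam g) a \<and> cmod (lam g) = 1"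
    using a by (auto simp: Bu_def)
  have "\<forall>g\<in>carrier G. alpha U g (op_scale c a) = op_scale (lam g) (op_scale c a) \<and> cmod (lam g) = 1"
    using lam by (simp add: alpha_scale op_scale_comm)
  thus ?thesis using R_closed(2) a by (auto simp: Bu_def)
qed

lemma Bu_comp: assumes a: "a \<in> Bu" and b: "b \<in> Bu" shows "a \<circ> b \<in> Bu"
proof -
  obtain la where la: "\<forall>g\<in>carrier G. alpha U g a = op_scale (la g) a \<and> cmod (la g) = 1"
    using a by (auto simp: Bu_def)
  obtain lb where lb: "\<forall>g\<in>carrier G. alpha U g b = op_scale (lb g) b \<and> cmod (lb g) = 1"
    using b by (auto simp: Bu_def)
  have ba: "bounded_op a" using Bu_bounded a .
  have "\<forall>g\<in>carrier G. alpha U g (a \<circ> b) = op_scale (la g * lb g) (a \<circ> b) \<and> cmod (la g * lb g) = 1"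
    using la lb by (simp add: alpha_comp op_scale_def fun_eq_iff bounded_opD(2)[OF ba] scaleC_scaleC norm_mult)
  thus ?thesis using R_closed(1) a b by (auto simp: Bu_def)
qed

lemma Bu_adj: assumes a: "a \<in> Bu" shows "adj a \<in> Bu"
proof -
  obtain la where la: "\<forall>g\<in>carrier G. alpha U g a = op_scale (la g) a \<and> cmod (la g) = 1"
    using a by (auto simp: Bu_def)
  have ba: "bounded_op a" using Bu_bounded a .
  have "\<forall>g\<in>carrier G. alpha U g (adj a) = op_scale (cnj (la g)) (adj a) \<and> cmod (cnj (la g)) = 1"
    using la by (simp add: alpha_adj ba adj_scale)
  thus ?thesis using R_closed(3) a by (auto simp: Bu_def)
qed

lemma eig_Bu: assumes a: "eigenoperator G R U a" shows "a \<in> Bu"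
proof -
  obtain lam where lam: "\<forall>g\<in>carrier G. alpha U g a = op_scale (lam g) a"
    and aR: "a \<in> R" and a0: "a \<noteq> zero_op"
    using a by (auto simp: eigenoperator_def)
  have aO: "a \<Omega> \<noteq> 0" using sep[OF aR] a0 by blast
  have "cmod (lam g) = 1" if g: "g \<in> carrier G" for g
  proof -
    have "alpha U g a \<Omega> = U g (a \<Omega>)" by (simp add: alpha_def adjU_Omega[OF g])
    hence "norm (alpha U g a \<Omega>) = norm (a \<Omega>)" by (simp add: unitary_norm[OF uni[OF g]])
    moreover have "alpha U g a \<Omega> = scaleC (lam g) (a \<Omega>)" using lam g by (simp add: op_scale_def)
    ultimately have "cmod (lam g) * norm (a \<Omega>) = 1 * norm (a \<Omega>)" by (simp add: norm_scaleC)
    thus ?thesis using aO by (simp only: mult_cancel_right norm_eq_zero) simp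
  qed
  thus ?thesis using lam aR by (auto simp: Bu_def)
qed

lemma zero_Bu: "zero_op \<in> Bu"
proof -
  have "\<forall>g\<in>carrier G. alpha U g zero_op = op_scale 1 zero_op \<and> cmod (1::complex) = 1"
  proof -
    have "op_scale 1 zero_op = (zero_op :: 'h \<Rightarrow> 'h)" by (simp add: op_scale_def zero_op_def fun_eq_iff)
    thus ?thesis by (simp add: alpha_zero)
  qed
  thus ?thesis using zero_R unfolding Bu_def by (intro CollectI conjI exI[of _ "\<lambda>_. 1"]) auto
qed

definition "Dset = {sumop xs | xs. set xs \<subseteq> Bu}"

lemma DsetI: "set xs \<subseteq> Bu \<Longrightarrow> a = sumop xs \<Longrightarrow> a \<in> Dset"
  unfolding Dset_def by auto

lemma D_star: "star_subalgebra Dset"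
  unfolding star_subalgebra_def
proof (intro conjI ballI allI subsetI)
  fix a assume "a \<in> Dset"
  then obtain xs where "set xs \<subseteq> Bu" "a = sumop xs" by (auto simp: Dset_def)
  thus "a \<in> {f. bounded_op f}" using Bu_bounded by (auto intro!: sumop_bounded)
next
  fix a b assume "a \<in> Dset" "b \<in> Dset"
  then obtain xs ys where xs: "set xs \<subseteq> Bu" "a = sumop xs" and ys: "set ys \<subseteq> Bu" "b = sumop ys"
    by (auto simp: Dset_def)
  show "op_add a b \<in> Dset" by (rule DsetI[of "xs @ ys"]) (use xs ys in \<open>auto simp: sumop_append\<close>)
  have xb: "\<forall>a\<in>set xs. bounded_op a" using xs Bu_bounded by auto
  show "a \<circ> b \<in> Dset"
  proof (rule DsetI[of "concat (map (\<lambda>a. map ((\<circ>) a) ys) xs)"])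
    show "set (concat (map (\<lambda>a. map ((\<circ>) a) ys) xs)) \<subseteq> Bu" using xs ys Bu_comp by auto
    show "a \<circ> b = sumop (concat (map (\<lambda>a. map ((\<circ>) a) ys) xs))"
      using sumop_mult[OF xb, of ys] xs ys by simp
  qed
next
  fix c a assume "a \<in> Dset"
  then obtain xs where xs: "set xs \<subseteq> Bu" "a = sumop xs" by (auto simp: Dset_def)
  show "op_scale c a \<in> Dset" by (rule DsetI[of "map (op_scale c) xs"]) (use xs Bu_scale in \<open>auto simp: sumop_scale\<close>)
next
  fix a assume "a \<in> Dset"
  then obtain xs where xs: "set xs \<subseteq> Bu" "a = sumop xs" by (auto simp: Dset_def)
  have xb: "\<forall>a\<in>set xs. bounded_op a" using xs Bu_bounded by auto
  show "adj a \<in> Dset" by (rule DsetI[of "map adj xs"]) (use xs Bu_adj xb in \<open>auto simp: adj_sumop\<close>)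
qed

lemma B_D: "Bset \<subseteq> Dset"
proof
  fix a assume a: "a \<in> Bset"
  have "a \<in> Bu" using a eig_Bu zero_Bu by (auto simp: Bset_def)
  hence "set [a] \<subseteq> Bu" by simp
  thus "a \<in> Dset" by (rule DsetI[OF _ sumop_single[symmetric]])
qed

lemma C_D: "Cset \<subseteq> Dset" unfolding Cset_def by (rule star_alg_gen_least[OF B_D D_star])

lemma orbit_T: "set xs \<subseteq> Bu \<Longrightarrow> g \<in> carrier G \<Longrightarrow> alpha U g (sumop xs) \<in> Tset xs"
proof (induction xs)
  case Nil thus ?case by (simp add: alpha_zero)
next
  case (Cons a xs)
  obtain la where la: "\<forall>g\<in>carrier G. alpha U g a = op_scale (la g) a \<and> cmod (la g) = 1"
    using Cons.prems by (auto simp: Bu_def)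
  have "alpha U g (sumop (a # xs)) = op_add (op_scale (la g) a) (alpha U g (sumop xs))"
    using la Cons.prems by (simp add: alpha_add)
  moreover have "alpha U g (sumop xs) \<in> Tset xs" using Cons by simp
  moreover have "cmod (la g) = 1" using la Cons.prems by simp
  ultimately show ?case by auto
qed

lemma orbit_tb: assumes a: "a \<in> Nset"
  shows "totally_bounded_Omega \<Omega> {alpha U g a | g. g \<in> carrier G}"
  unfolding totally_bounded_Omega_def
proof (intro allI impI)
  fix e :: real assume e: "0 < e"
  have "a \<Omega> \<in> closure {c \<Omega> | c. c \<in> Cset}" using N_Omega[OF a] by (simp add: Mset_def)
  then obtain y where y: "y \<in> {c \<Omega> | c. c \<in> Cset}" "dist y (a \<Omega>) < e/2"
    using e unfolding closure_approachable by (meson half_gt_zero)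
  then obtain c where c: "c \<in> Cset" "y = c \<Omega>" by auto
  obtain xs where xs: "set xs \<subseteq> Bu" "c = sumop xs" using C_D c(1) by (auto simp: Dset_def)
  obtain k where k: "finite k" "\<forall>s\<in>Tset xs. \<exists>b\<in>k. omega_norm \<Omega> (\<lambda>x. s x - b x) < e/2"
    using tb_Tset[of \<Omega> xs] e unfolding totally_bounded_Omega_def by (meson half_gt_zero)
  have "\<exists>b\<in>k. omega_norm \<Omega> (\<lambda>x. t x - b x) < e" if t: "t \<in> {alpha U g a | g. g \<in> carrier G}" for t
  proof -
    obtain g where g: "g \<in> carrier G" "t = alpha U g a" using t by auto
    have "alpha U g c \<in> Tset xs" using orbit_T[OF xs(1) g(1)] xs(2) by simp
    then obtain b where b: "b \<in> k" "norm (alpha U g c \<Omega> - b \<Omega>) < e/2"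
      using k(2) by (auto simp: omega_norm_def)
    have ta: "t \<Omega> = U g (a \<Omega>)" by (simp add: g(2) alpha_def adjU_Omega[OF g(1)])
    have tc: "alpha U g c \<Omega> = U g (c \<Omega>)" by (simp add: alpha_def adjU_Omega[OF g(1)])
    have "norm (t \<Omega> - alpha U g c \<Omega>) = norm (a \<Omega> - c \<Omega>)"
      unfolding ta tc bounded_op_diff[OF Ub[OF g(1)], symmetric] by (rule unitary_norm[OF uni[OF g(1)]])
    also have "\<dots> < e/2" using y(2) c(2) by (simp add: dist_norm norm_minus_commute)
    finally have "norm (t \<Omega> - alpha U g c \<Omega>) < e/2" .
    hence "norm (t \<Omega> - b \<Omega>) < e"
      using b(2) norm_triangle_ineq[of "t \<Omega> - alpha U g c \<Omega>" "alpha U g c \<Omega> - b \<Omega>"] by simp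
    thus ?thesis using b(1) by (auto simp: omega_norm_def)
  qed
  thus "\<exists>k. finite k \<and> (\<forall>t\<in>{alpha U g a | g. g \<in> carrier G}. \<exists>b\<in>k. omega_norm \<Omega> (\<lambda>x. t x - b x) < e)"
    using k(1) by blast
qed

end

theorem proposition6p5:
  fixes G :: "('g, 'm) monoid_scheme"
    and R :: "('h::complex_hilbert \<Rightarrow> 'h) set"
    and \<Omega> :: "'h"
    and U :: "'g \<Rightarrow> 'h \<Rightarrow> 'h"
  assumes "represented_system G R \<Omega> U"
  defines "B \<equiv> {a. eigenoperator G R U a} \<union> {zero_op}"
  defines "C \<equiv> star_alg_gen B"
  defines "N \<equiv> commutant (commutant C)"
  shows "N \<subseteq> R \<and> star_subalgebra N \<and>
         (\<forall>g\<in>carrier G. \<forall>a\<in>N. alpha U g a \<in> N) \<and>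
         (\<forall>a\<in>N. totally_bounded_Omega \<Omega> {alpha U g a | g. g \<in> carrier G})"
proof -
  interpret rsys G R \<Omega> U by unfold_locales (rule assms(1))
  have NN: "N = Nset" unfolding N_def C_def B_def Nset_def Cset_def Bset_def by (rule refl)
  show ?thesis unfolding NN using N_R N_star N_invariant orbit_tb by blast
qed

end
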